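(* Let $\{\alpha^k_{\mathbf y}\}_{k\ge0}$ satisfy $\alpha^k_{\mathbf y}\in[\underline{\alpha}_{\mathbf y},\overline{\alpha}_{\mathbf y}]\subset(0,2/L_f)$ for all $k$, and for each $K\ge1$ let $(\mathbf x_K,\mathbf z_K)\in\arg\min_{\mathbf x\in\mathcal X,\mathbf z\in\mathcal Y}\varphi_K(\mathbf x,\mathbf z)$ (assumed to exist). Then: (1) every limit point $\bar{\mathbf x}$ of $\{\mathbf x_K\}$ satisfies $\bar{\mathbf x}\in\arg\min_{\mathbf x\in\mathcal X}\varphi(\mathbf x)$; (2) $\inf_{\mathbf x\in\mathcal X,\mathbf z\in\mathcal Y}\varphi_K(\mathbf x,\mathbf z)\to\inf_{\mathbf x\in\mathcal X}\varphi(\mathbf x)$ as $K\to\infty$.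
   Context: Let $F,f:\mathbb R^n\times\mathbb R^m\to\mathbb R$ and $\mathcal X\subset\mathbb R^n$, $\mathcal Y\subset\mathbb R^m$. Assumptions: (i) $F$ and $f$ are continuous; (ii) $f$ is differentiable, $\nabla f$ is continuous, and there is $L_f>0$ such that for every $\mathbf x\in\mathcal X$ the map $\mathbf y\mapsto\nabla_{\mathbf y}f(\mathbf x,\mathbf y)$ is $L_f$-Lipschitz; (iii) $\mathcal X$ and $\mathcal Y$ are nonempty convex compact sets; (iv) $\mathcal S(\mathbf x):=\arg\min_{\mathbf y\in\mathcal Y}f(\mathbf x,\mathbf y)$ is nonempty for every $\mathbf x\in\mathcal X$; (v) for any $(\bar{\mathbf x},\bar{\mathbf y})$ minimizing $F(\mathbf x,\mathbf y)$ over the constraints $\mathbf x\in\mathcal X$, $\mathbf y\in\mathcal Y$, $\mathbf y\in\hat{\mathcal S}(\mathbf x)$, it holds that $\bar{\mathbf y}\in\mathcal S(\bar{\mathbf x})$. $\mathtt{Proj}_{\mathcal Y}$ denotes Euclidean projection onto $\mathcal Y$. The set of lower-level stationary points is $\hat{\mathcal S}(\mathbf x):=\{\mathbf y\in\mathcal Y: 0\in\nabla_{\mathbf y}f(\mathbf x,\mathbf y)+\mathcal N_{\mathcal Y}(\mathbf y)\}$, where $\mathcal N_{\mathcal Y}(\mathbf y)$ is the normal cone of $\mathcal Y$ at $\mathbf y$. Define $\varphi(\mathbf x):=\inf_{\mathbf y\in\mathcal S(\mathbf x)}F(\mathbf x,\mathbf y)$. Given step sizes $\{\alpha^k_{\mathbf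 y}\}$, for $\mathbf x\in\mathcal X$, $\mathbf z\in\mathcal Y$ define $\mathbf y_0(\mathbf x,\mathbf z)=\mathbf z$ and $\mathbf y_{k+1}(\mathbf x,\mathbf z)=\mathtt{Proj}_{\mathcal Y}\big(\mathbf y_k(\mathbf x,\mathbf z)-\alpha^k_{\mathbf y}\nabla_{\mathbf y}f(\mathbf x,\mathbf y_k(\mathbf x,\mathbf z))\big)$ for $k\ge0$. For $K\ge1$ define $\varphi_K(\mathbf x,\mathbf z):=\max_{1\le k\le K}F(\mathbf x,\mathbf y_k(\mathbf x,\mathbf z))$. *)

theory Defs
  imports "HOL-Analysis.Analysis"
begin

text \<open>The full gradient of f is a function grad, and the partial
gradient in y is the second component of grad.\<close>

definition normal_cone :: "'b::real_inner set \<Rightarrow> 'b \<Rightarrow> 'b set" where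
  "normal_cone C y = {v. \<forall>z\<in>C. inner v (z - y) \<le> 0}"

definition LL_sol :: "('a \<times> 'b \<Rightarrow> real) \<Rightarrow> 'b set \<Rightarrow> 'a \<Rightarrow> 'b set" where
  "LL_sol f Y x = {y \<in> Y. \<forall>y'\<in>Y. f (x, y) \<le> f (x, y')}"

definition LL_stat :: "('a \<times> 'b \<Rightarrow> 'a \<times> 'b) \<Rightarrow> 'b::real_inner set \<Rightarrow> 'a \<Rightarrow> 'b set" where
  "LL_stat grad Y x = {y \<in> Y. \<exists>v\<in>normal_cone Y y. snd (grad (x, y)) + v = 0}"

primrec pgd_iter :: "'b::euclidean_space set \<Rightarrow> ('a \<times> 'b \<Rightarrow> 'a \<times> 'b) \<Rightarrow> (nat \<Rightarrow> real)
    \<Rightarrow> 'a \<Rightarrow> 'b \<Rightarrow> nat \<Rightarrow> 'b" where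
  "pgd_iter Y grad alpha x z 0 = z"
| "pgd_iter Y grad alpha x z (Suc k) =
     closest_point Y (pgd_iter Y grad alpha x z k
                      - alpha k *\<^sub>R snd (grad (x, pgd_iter Y grad alpha x z k)))"

definition phi :: "('a \<times> 'b \<Rightarrow> real) \<Rightarrow> ('a \<times> 'b \<Rightarrow> real) \<Rightarrow> 'b set \<Rightarrow> 'a \<Rightarrow> real" where
  "phi F f Y x = Inf ((\<lambda>y. F (x, y)) ` LL_sol f Y x)"

definition phiK :: "('a \<times> 'b \<Rightarrow> real) \<Rightarrow> 'b::euclidean_space set \<Rightarrow> ('a \<times> 'b \<Rightarrow> 'a \<times> 'b)
    \<Rightarrow> (nat \<Rightarrow> real) \<Rightarrow> nat \<Rightarrow> 'a \<Rightarrow> 'b \<Rightarrow> real" where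
  "phiK F Y grad alpha K x z = Max ((\<lambda>k. F (x, pgd_iter Y grad alpha x z k)) ` {1..K})"

end

theory Submission
  imports Defs "HOL-Real_Asymp.Real_Asymp"
begin

lemma line_deriv:
  fixes f :: "'a::euclidean_space \<times> 'b::euclidean_space \<Rightarrow> real"
  assumes g: "\<And>p. GDERIV f p :> grad p"
  shows "((\<lambda>t. f (x, y + t *\<^sub>R d)) has_real_derivative (inner (snd (grad (x, y + t *\<^sub>R d))) d)) (at t)"
proof -
  have h1: "((\<lambda>t. (x, y + t *\<^sub>R d)) has_derivative (\<lambda>h. h *\<^sub>R (0, d))) (at t)"
    by (auto intro!: derivative_eq_intros simp: scaleR_prod_def)
  have h2: "(f has_derivative (\<lambda>h. inner h (grad (x, y + t *\<^sub>R d)))) (at (x, y + t *\<^sub>R d))"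
    using g[of "(x, y + t *\<^sub>R d)"] by (simp add: gderiv_def)
  have "((f \<circ> (\<lambda>t. (x, y + t *\<^sub>R d))) has_derivative ((\<lambda>h. inner h (grad (x, y + t *\<^sub>R d))) \<circ> (\<lambda>h. h *\<^sub>R (0, d)))) (at t)"
    by (rule diff_chain_at[OF h1 h2])
  moreover have "((\<lambda>h. inner h (grad (x, y + t *\<^sub>R d))) \<circ> (\<lambda>h. h *\<^sub>R (0, d))) = (\<lambda>h. inner (snd (grad (x, y + t *\<^sub>R d))) d * h)"
    by (rule ext) (simp add: inner_commute[of "(0,_)"] inner_Pair_0 inner_commute[of d])
  ultimately show ?thesis
    unfolding has_field_derivative_def by (simp add: o_def)
qed

lemma descent:
  fixes f :: "'a::euclidean_space \<times> 'b::euclidean_space \<Rightarrow> real"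
  assumes g: "\<And>p. GDERIV f p :> grad p"
    and Lip: "\<And>y1 y2. norm (snd (grad (x, y1)) - snd (grad (x, y2))) \<le> L * norm (y1 - y2)"
  shows "f (x, y') \<le> f (x, y) + inner (snd (grad (x, y))) (y' - y) + L / 2 * (norm (y' - y))^2"
proof -
  define d where "d = y' - y"
  define g0 where "g0 = snd (grad (x, y))"
  define \<phi> where "\<phi> t = f (x, y + t *\<^sub>R d) - t * inner g0 d - L / 2 * t^2 * (norm d)^2" for t
  define \<phi>' where "\<phi>' t = inner (snd (grad (x, y + t *\<^sub>R d))) d - inner g0 d - L * t * (norm d)^2" for t
  have D: "(\<phi> has_real_derivative \<phi>' t) (at t)" for t
    unfolding \<phi>_def \<phi>'_def
    by (rule derivative_eq_intros line_deriv[OF g] refl)+ simp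
  obtain z where z: "0 < z" "z < 1" "\<phi> 1 - \<phi> 0 = (1 - 0) * \<phi>' z"
    using MVT2[of 0 1 \<phi> \<phi>'] D by auto
  have "\<phi>' z \<le> 0"
  proof -
    have "inner (snd (grad (x, y + z *\<^sub>R d))) d - inner g0 d = inner (snd (grad (x, y + z *\<^sub>R d)) - g0) d"
      by (simp add: inner_diff_left)
    also have "\<dots> \<le> norm (snd (grad (x, y + z *\<^sub>R d)) - g0) * norm d"
      by (rule norm_cauchy_schwarz)
    also have "\<dots> \<le> L * norm (z *\<^sub>R d) * norm d"
      using Lip[of "y + z *\<^sub>R d" y] unfolding g0_def by (simp add: mult_right_mono)
    also have "\<dots> = L * z * (norm d)^2" using z by (simp add: power2_eq_square)
    finally show ?thesis unfolding \<phi>'_def by simp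
  qed
  then have "\<phi> 1 \<le> \<phi> 0" using z by simp
  then show ?thesis unfolding \<phi>_def d_def g0_def by (simp add: algebra_simps)
qed

lemma proj_fix:
  fixes Y :: "'b::euclidean_space set"
  assumes "convex Y" "closed Y" "y \<in> Y" "\<And>z. z \<in> Y \<Longrightarrow> inner (u - y) (z - y) \<le> 0"
  shows "closest_point Y u = y"
proof -
  have "dist u y \<le> dist u z" if z: "z \<in> Y" for z
  proof -
    have e: "u - z = (u - y) - (z - y)" by simp
    have "inner (u - y) (u - y) \<le> inner (u - z) (u - z)"
      unfolding e using assms(4)[OF z] inner_ge_zero[of "z - y"]
      by (simp add: inner_diff_left inner_diff_right inner_commute)
    then show ?thesis by (simp add: dist_norm norm_le)
  qed
  then show ?thesis using closest_point_unique[OF assms(1,2,3)] by auto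
qed

lemma min_stat:
  fixes f :: "'a::euclidean_space \<times> 'b::euclidean_space \<Rightarrow> real"
  assumes g: "\<And>p. GDERIV f p :> grad p" and cY: "convex Y"
    and y: "y \<in> LL_sol f Y x"
  shows "y \<in> LL_stat grad Y x"
proof -
  have yY: "y \<in> Y" and ymin: "\<And>y'. y' \<in> Y \<Longrightarrow> f (x, y) \<le> f (x, y')" using y by (auto simp: LL_sol_def)
  have "inner (- snd (grad (x, y))) (z - y) \<le> 0" if z: "z \<in> Y" for z
  proof (rule ccontr)
    assume "\<not> ?thesis"
    then have neg: "inner (snd (grad (x, y + 0 *\<^sub>R (z - y)))) (z - y) < 0" by simp
    obtain e where e: "e > 0" "\<And>h. h > 0 \<Longrightarrow> h < e \<Longrightarrow> f (x, y + (0 + h) *\<^sub>R (z - y)) < f (x, y + 0 *\<^sub>R (z - y))"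
      using DERIV_neg_dec_right[OF line_deriv[OF g, of x y "z - y" 0] neg] by blast
    define h where "h = min (e/2) 1"
    have h: "h > 0" "h < e" "h \<le> 1" using e by (auto simp: h_def)
    have "y + h *\<^sub>R (z - y) = (1 - h) *\<^sub>R y + h *\<^sub>R z" by (simp add: algebra_simps)
    also have "\<dots> \<in> Y" using convexD_alt[OF cY yY z, of h] h by auto
    finally have "f (x, y) \<le> f (x, y + h *\<^sub>R (z - y))" by (rule ymin)
    with e(2)[OF h(1,2)] show False by simp
  qed
  then have "- snd (grad (x, y)) \<in> normal_cone Y y" unfolding normal_cone_def by blast
  then show ?thesis unfolding LL_stat_def using yY by (auto intro!: bexI[of _ "- snd (grad (x, y))"])
qed

lemma stat_fix:
  fixes Y :: "'b::euclidean_space set"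
  assumes "convex Y" "closed Y" "y \<in> LL_stat grad Y x" "a \<ge> 0"
  shows "closest_point Y (y - a *\<^sub>R snd (grad (x, y))) = y"
proof -
  obtain v where y: "y \<in> Y" and v0: "v \<in> normal_cone Y y" and gv0: "snd (grad (x, y)) + v = 0"
    using assms(3) unfolding LL_stat_def by auto
  have v: "\<And>z. z \<in> Y \<Longrightarrow> inner v (z - y) \<le> 0" using v0 unfolding normal_cone_def by auto
  have gv: "snd (grad (x, y)) = - v" using gv0 by (simp add: add_eq_0_iff)
  show ?thesis
  proof (rule proj_fix[OF assms(1,2) y])
    fix z assume "z \<in> Y"
    then show "inner (y - a *\<^sub>R snd (grad (x, y)) - y) (z - y) \<le> 0"
      using v[of z] assms(4) by (simp add: gv mult_nonneg_nonpos)
  qed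
qed

lemma fix_stat:
  fixes Y :: "'b::euclidean_space set"
  assumes "convex Y" "closed Y" "Y \<noteq> {}" "closest_point Y (y - a *\<^sub>R snd (grad (x, y))) = y" "a > 0"
  shows "y \<in> LL_stat grad Y x"
proof -
  have yY: "y \<in> Y" using closest_point_in_set[OF assms(2,3)] assms(4) by metis
  have "inner (- snd (grad (x, y))) (z - y) \<le> 0" if z: "z \<in> Y" for z
  proof -
    have "inner (y - a *\<^sub>R snd (grad (x, y)) - y) (z - y) \<le> 0"
      using closest_point_dot[OF assms(1,2) z, of "y - a *\<^sub>R snd (grad (x, y))"] assms(4) by simp
    then have "a * inner (- snd (grad (x, y))) (z - y) \<le> 0" by simp
    then show ?thesis using assms(5) by (simp add: zero_le_mult_iff)
  qed
  then have "- snd (grad (x, y)) \<in> normal_cone Y y" unfolding normal_cone_def by blast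
  then show ?thesis unfolding LL_stat_def using yY by (auto intro!: bexI[of _ "- snd (grad (x, y))"])
qed


locale setting =
  fixes F f :: "'a::euclidean_space \<times> 'b::euclidean_space \<Rightarrow> real"
    and grad :: "'a \<times> 'b \<Rightarrow> 'a \<times> 'b"
    and X :: "'a set" and Y :: "'b set"
    and Lf alo ahi :: real and alpha :: "nat \<Rightarrow> real"
    and xK :: "nat \<Rightarrow> 'a" and zK :: "nat \<Rightarrow> 'b"
  assumes contF: "continuous_on UNIV F"
    and contf: "continuous_on UNIV f"
    and grad_f: "\<And>p. GDERIV f p :> grad p"
    and cont_grad: "continuous_on UNIV grad"
    and Lf_pos: "Lf > 0"
    and Lip: "\<And>x y1 y2. x \<in> X \<Longrightarrow>
                 norm (snd (grad (x, y1)) - snd (grad (x, y2))) \<le> Lf * norm (y1 - y2)"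
    and X: "X \<noteq> {}" "convex X" "compact X"
    and Y: "Y \<noteq> {}" "convex Y" "compact Y"
    and S_ne: "\<And>x. x \<in> X \<Longrightarrow> LL_sol f Y x \<noteq> {}"
    and stat_opt: "\<And>xb yb. xb \<in> X \<Longrightarrow> yb \<in> LL_stat grad Y xb \<Longrightarrow>
                     (\<forall>x\<in>X. \<forall>y\<in>LL_stat grad Y x. F (xb, yb) \<le> F (x, y)) \<Longrightarrow>
                     yb \<in> LL_sol f Y xb"
    and step: "0 < alo" "alo \<le> ahi" "ahi < 2 / Lf" "\<And>k. alo \<le> alpha k \<and> alpha k \<le> ahi"
    and min_K: "\<And>K. K \<ge> 1 \<Longrightarrow> xK K \<in> X \<and> zK K \<in> Y \<and>
                  (\<forall>x\<in>X. \<forall>z\<in>Y. phiK F Y grad alpha K (xK K) (zK K) \<le> phiK F Y grad alpha K x z)"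
begin

abbreviation yit where "yit x z k \<equiv> pgd_iter Y grad alpha x z k"

definition c where "c = 1 / ahi - Lf / 2"

lemma cY: "closed Y" using Y(3) compact_imp_closed by blast

lemma c_pos: "c > 0"
proof -
  have "ahi * Lf < 2" using step(3) Lf_pos by (simp add: field_simps)
  then have "Lf / 2 < 1 / ahi" using step(1,2) by (simp add: field_simps)
  then show ?thesis by (simp add: c_def)
qed

lemma iter_Y: "yit x z (Suc k) \<in> Y"
  using closest_point_in_set[OF cY Y(1)] by simp

lemma pgd_descent:
  assumes x: "x \<in> X" and y: "y \<in> Y" and a: "alo \<le> a" "a \<le> ahi"
  shows "f (x, closest_point Y (y - a *\<^sub>R snd (grad (x, y)))) \<le> f (x, y) - c * (norm (closest_point Y (y - a *\<^sub>R snd (grad (x, y))) - y))^2"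
proof -
  define g where "g = snd (grad (x, y))"
  define u where "u = closest_point Y (y - a *\<^sub>R g)"
  define d where "d = u - y"
  have apos: "a > 0" using a step(1) by simp
  have "inner (y - a *\<^sub>R g - u) (y - u) \<le> 0"
    unfolding u_def by (rule closest_point_dot[OF Y(2) cY y])
  moreover have "inner (y - a *\<^sub>R g - u) (y - u) = (norm d)^2 + a * inner g d"
    unfolding d_def by (simp add: inner_diff_left inner_diff_right inner_commute power2_norm_eq_inner algebra_simps)
  ultimately have gd: "a * inner g d \<le> - ((norm d)^2)" by simp
  have "inner g d \<le> - ((norm d)^2 / ahi)"
  proof -
    have "inner g d \<le> - ((norm d)^2 / a)" using gd apos by (simp add: field_simps)
    also have "\<dots> \<le> - ((norm d)^2 / ahi)" using apos a by (simp add: frac_le)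
    finally show ?thesis .
  qed
  moreover have "f (x, u) \<le> f (x, y) + inner g d + Lf / 2 * (norm d)^2"
    unfolding g_def d_def by (rule descent[OF grad_f Lip[OF x]])
  ultimately have "f (x, u) \<le> f (x, y) - c * (norm d)^2"
    by (simp add: c_def algebra_simps diff_divide_distrib)
  then show ?thesis unfolding u_def d_def g_def .
qed


lemma f_bound: "\<exists>M>0. \<forall>p\<in>X \<times> Y. \<bar>f p\<bar> \<le> M"
proof -
  have "compact (f ` (X \<times> Y))"
    by (rule compact_continuous_image[OF continuous_on_subset[OF contf] compact_Times[OF X(3) Y(3)]]) auto
  then have "bounded (f ` (X \<times> Y))" by (rule compact_imp_bounded)
  then show ?thesis unfolding bounded_pos by auto
qed

definition M where "M = (SOME M. M > 0 \<and> (\<forall>p\<in>X \<times> Y. \<bar>f p\<bar> \<le> M))"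

lemma M: "M > 0" "\<And>x y. x \<in> X \<Longrightarrow> y \<in> Y \<Longrightarrow> \<bar>f (x, y)\<bar> \<le> M"
  using someI_ex[OF f_bound] unfolding M_def by auto

lemma small_step:
  assumes x: "x \<in> X" and z: "z \<in> Y" and K: "K \<ge> 2"
  shows "\<exists>k. 1 \<le> k \<and> k < K \<and> c * (norm (yit x z (Suc k) - yit x z k))^2 \<le> 3 * M / (real K - 1)"
proof (rule ccontr)
  define B where "B = 3 * M / (real K - 1)"
  assume "\<not> ?thesis"
  then have big: "\<And>k. 1 \<le> k \<Longrightarrow> k < K \<Longrightarrow> c * (norm (yit x z (Suc k) - yit x z k))^2 > B"
    unfolding B_def by force
  have ind: "n \<le> K - 1 \<Longrightarrow> f (x, yit x z (Suc n)) \<le> f (x, yit x z 1) - real n * B" for n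
  proof (induction n)
    case 0 then show ?case by simp
  next
    case (Suc n)
    have desc: "f (x, yit x z (Suc (Suc n))) \<le> f (x, yit x z (Suc n)) - c * (norm (yit x z (Suc (Suc n)) - yit x z (Suc n)))^2"
      using pgd_descent[OF x iter_Y[of x z n], of "alpha (Suc n)"] step(4)[of "Suc n"] by simp
    have "c * (norm (yit x z (Suc (Suc n)) - yit x z (Suc n)))^2 > B"
      using big[of "Suc n"] Suc.prems by simp
    with desc Suc.IH Suc.prems show ?case by (simp add: algebra_simps)
  qed
  have K1: "Suc (K - 1) = K" using K by simp
  have "f (x, yit x z K) \<le> f (x, yit x z 1) - real (K - 1) * B"
    using ind[of "K - 1"] K1 by simp
  also have "real (K - 1) * B = 3 * M" unfolding B_def using K by (simp add: of_nat_diff)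
  finally have "f (x, yit x z K) \<le> f (x, yit x z 1) - 3 * M" .
  moreover have "\<bar>f (x, yit x z K)\<bar> \<le> M" using M(2)[OF x, of "yit x z K"] iter_Y[of x z "K - 1"] K1 by simp
  moreover have "\<bar>f (x, yit x z 1)\<bar> \<le> M" using M(2)[OF x iter_Y[of x z 0]] by simp
  ultimately show False using M(1) by linarith
qed


definition P where "P K k \<longleftrightarrow> 1 \<le> k \<and> k < K \<and>
   c * (norm (yit (xK K) (zK K) (Suc k) - yit (xK K) (zK K) k))^2 \<le> 3 * M / (real K - 1)"

definition kk where "kk K = (if K \<ge> 2 then (SOME k. P K k) else 1)"

lemma kk: "K \<ge> 2 \<Longrightarrow> P K (kk K)"
  unfolding kk_def using small_step[of "xK K" "zK K" K] min_K[of K]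
  by (simp add: P_def[symmetric]) (rule someI_ex, simp add: P_def)

lemma kk1: "kk K \<ge> 1"
proof (cases "K \<ge> 2")
  case True then show ?thesis using kk[OF True] unfolding P_def by blast
next
  case False then show ?thesis by (simp add: kk_def)
qed

definition w where "w K = yit (xK K) (zK K) (kk K)"
definition w' where "w' K = yit (xK K) (zK K) (Suc (kk K))"
definition mK where "mK K = phiK F Y grad alpha K (xK K) (zK K)"

lemma wY: "w K \<in> Y"
proof -
  have "kk K = Suc (kk K - 1)" using kk1[of K] by simp
  then show ?thesis unfolding w_def by (metis iter_Y)
qed

lemma w'_eq: "w' K = closest_point Y (w K - alpha (kk K) *\<^sub>R snd (grad (xK K, w K)))"
  unfolding w_def w'_def by simp

lemma w_le: "K \<ge> 2 \<Longrightarrow> F (xK K, w K) \<le> mK K"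
  unfolding mK_def phiK_def w_def
  using kk[of K] by (intro Max_ge) (auto simp: P_def)

lemma iter_fix: "y \<in> LL_stat grad Y x \<Longrightarrow> yit x y k = y"
proof (induction k)
  case 0 then show ?case by simp
next
  case (Suc k)
  have "alpha k \<ge> 0" using step(1) step(4)[of k] by linarith
  then show ?case using Suc stat_fix[OF Y(2) cY Suc.prems] by simp
qed

lemma phiK_fix: "y \<in> LL_stat grad Y x \<Longrightarrow> K \<ge> 1 \<Longrightarrow> phiK F Y grad alpha K x y = F (x, y)"
proof -
  assume y: "y \<in> LL_stat grad Y x" and K: "K \<ge> 1"
  have "(\<lambda>k. F (x, yit x y k)) ` {1..K} = {F (x, y)}"
    using K by (auto simp: iter_fix[OF y])
  then show ?thesis unfolding phiK_def by simp
qed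

lemma m_le_stat: "K \<ge> 1 \<Longrightarrow> x \<in> X \<Longrightarrow> y \<in> LL_stat grad Y x \<Longrightarrow> mK K \<le> F (x, y)"
proof -
  assume K: "K \<ge> 1" and x: "x \<in> X" and y: "y \<in> LL_stat grad Y x"
  have "y \<in> Y" using y by (simp add: LL_stat_def)
  then have "mK K \<le> phiK F Y grad alpha K x y" using min_K[OF K] x unfolding mK_def by blast
  then show ?thesis using phiK_fix[OF y K] by simp
qed

lemma step0: "(\<lambda>K. norm (w' K - w K)) \<longlonglongrightarrow> 0"
proof -
  have ev: "eventually (\<lambda>K. (norm (w' K - w K))^2 \<le> 3 * M / (real K - 1) / c) sequentially"
    using eventually_ge_at_top[of 2]
  proof (rule eventually_mono)
    fix K :: nat assume K: "K \<ge> 2"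
    then have h: "c * (norm (w' K - w K))^2 \<le> 3 * M / (real K - 1)"
      using kk[OF K] unfolding P_def w_def w'_def by simp
    show "(norm (w' K - w K))^2 \<le> 3 * M / (real K - 1) / c"
      by (subst pos_le_divide_eq[OF c_pos]) (use h in \<open>simp add: mult.commute\<close>)
  qed
  have l1: "(\<lambda>K::nat. 1 / (real K - 1)) \<longlonglongrightarrow> 0"
    by real_asymp
  have "(\<lambda>K. (3 * M) * (1 / (real K - 1)) / c) \<longlonglongrightarrow> (3 * M) * 0 / c"
    using c_pos by (intro tendsto_intros l1) auto
  then have lim: "(\<lambda>K. 3 * M / (real K - 1) / c) \<longlonglongrightarrow> 0"
    by simp
  have "(\<lambda>K. (norm (w' K - w K))^2) \<longlonglongrightarrow> 0"
    by (rule tendsto_sandwich[OF _ ev tendsto_const lim]) simp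
  then have "(\<lambda>K. sqrt ((norm (w' K - w K))^2)) \<longlonglongrightarrow> sqrt 0"
    by (rule tendsto_real_sqrt)
  then show ?thesis by simp
qed


lemma subseq:
  fixes r :: "nat \<Rightarrow> nat"
  assumes r: "strict_mono r" "\<And>j. r j \<ge> 2"
  shows "\<exists>s xb yb. strict_mono s \<and> xb \<in> X \<and> yb \<in> LL_stat grad Y xb \<and>
     (\<lambda>j. xK (r (s j))) \<longlonglongrightarrow> xb \<and>
     (\<lambda>j. F (xK (r (s j)), w (r (s j)))) \<longlonglongrightarrow> F (xb, yb) \<and>
     (\<forall>x\<in>X. \<forall>y\<in>LL_stat grad Y x. F (xb, yb) \<le> F (x, y))"
proof -
  define q where "q j = (xK (r j), w (r j), alpha (kk (r j)))" for j
  have qin: "\<forall>j. q j \<in> X \<times> Y \<times> {alo..ahi}"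
  proof
    fix j
    have "r j \<ge> 1" using r(2)[of j] by simp
    then show "q j \<in> X \<times> Y \<times> {alo..ahi}"
      using min_K[of "r j"] wY[of "r j"] step(4)[of "kk (r j)"] by (simp add: q_def)
  qed
  have sc: "seq_compact (X \<times> Y \<times> {alo..ahi})"
    by (intro compact_imp_seq_compact compact_Times X(3) Y(3) compact_Icc)
  obtain l s where l: "l \<in> X \<times> Y \<times> {alo..ahi}" "strict_mono s" "(q \<circ> s) \<longlonglongrightarrow> l"
    by (rule seq_compactE[OF sc, of q]) (use qin in auto)
  obtain xb yb ab where lv: "l = (xb, yb, ab)" by (cases l) auto
  have xb: "xb \<in> X" and ab: "alo \<le> ab" using l(1) lv by auto
  have xs: "(\<lambda>j. xK (r (s j))) \<longlonglongrightarrow> xb" using tendsto_fst[OF l(3)] by (simp add: lv q_def o_def)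
  have ws: "(\<lambda>j. w (r (s j))) \<longlonglongrightarrow> yb" using tendsto_fst[OF tendsto_snd[OF l(3)]] by (simp add: lv q_def o_def)
  define T where "T p = closest_point Y (fst (snd p) - snd (snd p) *\<^sub>R snd (grad (fst p, fst (snd p))))"
    for p :: "'a \<times> 'b \<times> real"
  have Tc: "continuous_on UNIV T" unfolding T_def
    by (intro continuous_on_compose2[OF continuous_on_closest_point[OF Y(2) cY Y(1)]]
          continuous_intros continuous_on_compose2[OF cont_grad]) auto
  have "(\<lambda>j. T ((q \<circ> s) j)) \<longlonglongrightarrow> T l"
    by (rule continuous_on_tendsto_compose[OF Tc l(3)]) auto
  moreover have "T ((q \<circ> s) j) = w' (r (s j))" for j
    by (simp add: T_def q_def w'_eq)
  ultimately have T1: "(\<lambda>j. w' (r (s j))) \<longlonglongrightarrow> T l" by simp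
  have rs: "strict_mono (r \<circ> s)" by (rule strict_mono_o[OF r(1) l(2)])
  have "((\<lambda>K. norm (w' K - w K)) \<circ> (r \<circ> s)) \<longlonglongrightarrow> 0"
    by (rule LIMSEQ_subseq_LIMSEQ[OF step0 rs])
  then have "(\<lambda>j. w' (r (s j)) - w (r (s j))) \<longlonglongrightarrow> 0"
    by (simp add: o_def tendsto_norm_zero_iff)
  from tendsto_add[OF this ws] have "(\<lambda>j. w' (r (s j))) \<longlonglongrightarrow> 0 + yb" by simp
  then have "T l = yb" using T1 LIMSEQ_unique by auto
  then have "closest_point Y (yb - ab *\<^sub>R snd (grad (xb, yb))) = yb" by (simp add: T_def lv)
  then have yb: "yb \<in> LL_stat grad Y xb"
    by (rule fix_stat[OF Y(2) cY Y(1)]) (use ab step(1) in linarith)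
  have Fl: "(\<lambda>j. F (xK (r (s j)), w (r (s j)))) \<longlonglongrightarrow> F (xb, yb)"
    by (rule continuous_on_tendsto_compose[OF contF tendsto_Pair[OF xs ws]]) auto
  have "F (xb, yb) \<le> F (x, y)" if x: "x \<in> X" and y: "y \<in> LL_stat grad Y x" for x y
  proof (rule LIMSEQ_le_const2[OF Fl], intro exI allI impI)
    fix j
    have "F (xK (r (s j)), w (r (s j))) \<le> mK (r (s j))" using w_le r(2) by blast
    also have "\<dots> \<le> F (x, y)" using m_le_stat[OF _ x y, of "r (s j)"] r(2)[of "s j"] by simp
    finally show "F (xK (r (s j)), w (r (s j))) \<le> F (x, y)" .
  qed
  then show ?thesis using l(2) xb yb xs Fl by blast
qed


lemma phi_attain:
  assumes x: "x \<in> X"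
  shows "\<exists>y\<in>LL_sol f Y x. phi F f Y x = F (x, y) \<and> (\<forall>y'\<in>LL_sol f Y x. F (x, y) \<le> F (x, y'))"
proof -
  have cf: "continuous_on UNIV (\<lambda>y. f (x, y))"
    by (intro continuous_on_compose2[OF contf] continuous_intros) auto
  have eq: "LL_sol f Y x = Y \<inter> (\<Inter>y'\<in>Y. {y. f (x, y) \<le> f (x, y')})"
    unfolding LL_sol_def by auto
  have "closed (\<Inter>y'\<in>Y. {y. f (x, y) \<le> f (x, y')})"
    by (intro closed_INT ballI closed_Collect_le cf continuous_on_const)
  then have cpt: "compact (LL_sol f Y x)" unfolding eq by (intro compact_Int_closed Y(3))
  have cF: "continuous_on (LL_sol f Y x) (\<lambda>y. F (x, y))"
    by (intro continuous_on_compose2[OF contF] continuous_intros) auto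
  obtain y where y: "y \<in> LL_sol f Y x" "\<And>y'. y' \<in> LL_sol f Y x \<Longrightarrow> F (x, y) \<le> F (x, y')"
    using continuous_attains_inf[OF cpt S_ne[OF x] cF] by blast
  have "phi F f Y x = F (x, y)" unfolding phi_def
    by (rule cInf_eq_minimum) (use y in auto)
  then show ?thesis using y by blast
qed

lemma F_lower: "\<exists>B. \<forall>x\<in>X. \<forall>y\<in>Y. B \<le> F (x, y)"
proof -
  have "compact (F ` (X \<times> Y))"
    by (rule compact_continuous_image[OF continuous_on_subset[OF contF] compact_Times[OF X(3) Y(3)]]) auto
  then have "bounded (F ` (X \<times> Y))" by (rule compact_imp_bounded)
  then obtain b where "\<forall>p\<in>X \<times> Y. norm (F p) \<le> b" unfolding bounded_pos by auto
  then have "\<forall>x\<in>X. \<forall>y\<in>Y. - b \<le> F (x, y)" by fastforce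
  then show ?thesis by blast
qed

lemma bdd: "bdd_below (phi F f Y ` X)"
proof -
  obtain B where B: "\<forall>x\<in>X. \<forall>y\<in>Y. B \<le> F (x, y)" using F_lower by blast
  have "B \<le> phi F f Y x" if x: "x \<in> X" for x
  proof -
    obtain y where y: "y \<in> LL_sol f Y x" "phi F f Y x = F (x, y)" using phi_attain[OF x] by blast
    then have "y \<in> Y" by (simp add: LL_sol_def)
    then show ?thesis using B x y by simp
  qed
  then show ?thesis by (rule bdd_belowI2)
qed

lemma shift:
  fixes r :: "nat \<Rightarrow> nat"
  assumes "strict_mono r"
  shows "strict_mono (r \<circ> (\<lambda>j. j + 2))" "\<And>j. (r \<circ> (\<lambda>j. j + 2)) j \<ge> 2"
proof -
  have "strict_mono (\<lambda>j::nat. j + 2)" by (simp add: strict_mono_def)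
  then show "strict_mono (r \<circ> (\<lambda>j. j + 2))" by (rule strict_mono_o[OF assms])
  fix j
  show "(r \<circ> (\<lambda>j. j + 2)) j \<ge> 2" using seq_suble[OF assms, of "j + 2"] by simp
qed

lemma limit_sol:
  assumes xb: "xb \<in> X" and yb: "yb \<in> LL_stat grad Y xb"
    and mn: "\<forall>x\<in>X. \<forall>y\<in>LL_stat grad Y x. F (xb, yb) \<le> F (x, y)"
  shows "phi F f Y xb \<le> F (xb, yb)"
proof -
  have "yb \<in> LL_sol f Y xb" by (rule stat_opt[OF xb yb mn])
  then show ?thesis using phi_attain[OF xb] by fastforce
qed

lemma part1:
  fixes r :: "nat \<Rightarrow> nat"
  assumes r: "strict_mono r" and lim: "(xK \<circ> r) \<longlonglongrightarrow> xb"
  shows "xb \<in> X \<and> (\<forall>x\<in>X. phi F f Y xb \<le> phi F f Y x)"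
proof -
  define r2 where "r2 = r \<circ> (\<lambda>j. j + 2)"
  obtain s x0 y0 where s: "strict_mono s" "x0 \<in> X" "y0 \<in> LL_stat grad Y x0"
    "(\<lambda>j. xK (r2 (s j))) \<longlonglongrightarrow> x0" "\<forall>x\<in>X. \<forall>y\<in>LL_stat grad Y x. F (x0, y0) \<le> F (x, y)"
    using subseq[OF shift[OF r]] unfolding r2_def by blast
  have "strict_mono ((\<lambda>j. j + 2) \<circ> s)"
    using strict_mono_o[OF _ s(1), of "\<lambda>j. j + 2"] by (simp add: strict_mono_def)
  from LIMSEQ_subseq_LIMSEQ[OF lim this] have "(\<lambda>j. xK (r2 (s j))) \<longlonglongrightarrow> xb"
    by (simp add: r2_def o_def)
  then have xb: "xb = x0" using s(4) LIMSEQ_unique by blast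
  have "phi F f Y x0 \<le> phi F f Y x" if x: "x \<in> X" for x
  proof -
    obtain y where y: "y \<in> LL_sol f Y x" "phi F f Y x = F (x, y)" using phi_attain[OF x] by blast
    have "phi F f Y x0 \<le> F (x0, y0)" by (rule limit_sol[OF s(2,3,5)])
    also have "\<dots> \<le> F (x, y)" using s(5) x min_stat[OF grad_f Y(2) y(1)] by blast
    finally show ?thesis using y by simp
  qed
  then show ?thesis using xb s(2) by simp
qed

lemma mK_le: "K \<ge> 1 \<Longrightarrow> mK K \<le> Inf (phi F f Y ` X)"
proof -
  assume K: "K \<ge> 1"
  show ?thesis
  proof (rule cInf_greatest)
    show "phi F f Y ` X \<noteq> {}" using X(1) by simp
    fix v assume "v \<in> phi F f Y ` X"
    then obtain x where x: "x \<in> X" "v = phi F f Y x" by blast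
    obtain y where y: "y \<in> LL_sol f Y x" "phi F f Y x = F (x, y)" using phi_attain[OF x(1)] by blast
    show "mK K \<le> v" using m_le_stat[OF K x(1) min_stat[OF grad_f Y(2) y(1)]] x y by simp
  qed
qed

lemma mK_lower:
  assumes e: "e > 0"
  shows "eventually (\<lambda>K. Inf (phi F f Y ` X) - e < mK K) sequentially"
proof (rule ccontr)
  define L where "L = Inf (phi F f Y ` X)"
  assume "\<not> ?thesis"
  then have "\<not> (\<exists>N. \<forall>K\<ge>N. L - e < mK K)" unfolding eventually_sequentially L_def .
  then have "\<forall>N. \<exists>K\<ge>N. mK K \<le> L - e" by (meson not_less)
  then have "infinite {K. mK K \<le> L - e}" unfolding infinite_nat_iff_unbounded_le by blast
  then obtain r :: "nat \<Rightarrow> nat" where r: "strict_mono r" "\<And>n. r n \<in> {K. mK K \<le> L - e}"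
    using infinite_enumerate by blast
  define r2 where "r2 = r \<circ> (\<lambda>j. j + 2)"
  have r2ge: "\<And>j. r2 j \<ge> 2" using shift(2)[OF r(1)] unfolding r2_def .
  obtain s x0 y0 where s: "strict_mono s" "x0 \<in> X" "y0 \<in> LL_stat grad Y x0"
    "(\<lambda>j. F (xK (r2 (s j)), w (r2 (s j)))) \<longlonglongrightarrow> F (x0, y0)"
    "\<forall>x\<in>X. \<forall>y\<in>LL_stat grad Y x. F (x0, y0) \<le> F (x, y)"
    using subseq[OF shift[OF r(1)]] unfolding r2_def by blast
  have "F (x0, y0) \<le> L - e"
  proof (rule LIMSEQ_le_const2[OF s(4)], intro exI allI impI)
    fix j
    have "F (xK (r2 (s j)), w (r2 (s j))) \<le> mK (r2 (s j))" using w_le r2ge by blast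
    also have "\<dots> \<le> L - e" using r(2) unfolding r2_def by simp
    finally show "F (xK (r2 (s j)), w (r2 (s j))) \<le> L - e" .
  qed
  moreover have "phi F f Y x0 \<le> F (x0, y0)" by (rule limit_sol[OF s(2,3,5)])
  moreover have "L \<le> phi F f Y x0" unfolding L_def by (rule cInf_lower[OF _ bdd]) (use s(2) in simp)
  ultimately show False using e by simp
qed

lemma part2: "(\<lambda>K. Inf {phiK F Y grad alpha K x z | x z. x \<in> X \<and> z \<in> Y}) \<longlonglongrightarrow> Inf (phi F f Y ` X)"
proof -
  have lim: "mK \<longlonglongrightarrow> Inf (phi F f Y ` X)"
  proof (rule order_tendstoI)
    fix a assume "a < Inf (phi F f Y ` X)"
    then show "eventually (\<lambda>K. a < mK K) sequentially"
      using mK_lower[of "Inf (phi F f Y ` X) - a"] by simp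
  next
    fix a assume a: "Inf (phi F f Y ` X) < a"
    show "eventually (\<lambda>K. mK K < a) sequentially"
      using eventually_ge_at_top[of 1]
    proof (rule eventually_mono)
      fix K :: nat assume K: "K \<ge> 1"
      then show "mK K < a" using mK_le[OF K] a by linarith
    qed
  qed
  have ev: "eventually (\<lambda>K. mK K = Inf {phiK F Y grad alpha K x z | x z. x \<in> X \<and> z \<in> Y}) sequentially"
    using eventually_ge_at_top[of 1]
  proof (rule eventually_mono)
    fix K :: nat assume K: "K \<ge> 1"
    have mem: "mK K \<in> {phiK F Y grad alpha K x z | x z. x \<in> X \<and> z \<in> Y}"
      using min_K[OF K] unfolding mK_def by blast
    have le: "\<And>v. v \<in> {phiK F Y grad alpha K x z | x z. x \<in> X \<and> z \<in> Y} \<Longrightarrow> mK K \<le> v"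
      using min_K[OF K] unfolding mK_def by blast
    then show "mK K = Inf {phiK F Y grad alpha K x z | x z. x \<in> X \<and> z \<in> Y}"
      using cInf_eq_minimum[OF mem le] by simp
  qed
  show ?thesis using tendsto_cong[OF ev] lim by simp
qed

end

theorem theorem3p1:
  fixes F f :: "'a::euclidean_space \<times> 'b::euclidean_space \<Rightarrow> real"
    and grad :: "'a \<times> 'b \<Rightarrow> 'a \<times> 'b"
    and X :: "'a set" and Y :: "'b set"
    and Lf alo ahi :: real and alpha :: "nat \<Rightarrow> real"
    and xK :: "nat \<Rightarrow> 'a" and zK :: "nat \<Rightarrow> 'b"
  assumes contF: "continuous_on UNIV F"
    and contf: "continuous_on UNIV f"
    and grad_f: "\<And>p. GDERIV f p :> grad p"
    and cont_grad: "continuous_on UNIV grad"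
    and Lf_pos: "Lf > 0"
    and Lip: "\<And>x y1 y2. x \<in> X \<Longrightarrow>
                 norm (snd (grad (x, y1)) - snd (grad (x, y2))) \<le> Lf * norm (y1 - y2)"
    and X: "X \<noteq> {}" "convex X" "compact X"
    and Y: "Y \<noteq> {}" "convex Y" "compact Y"
    and S_ne: "\<And>x. x \<in> X \<Longrightarrow> LL_sol f Y x \<noteq> {}"
    and stat_opt: "\<And>xb yb. xb \<in> X \<Longrightarrow> yb \<in> LL_stat grad Y xb \<Longrightarrow>
                     (\<forall>x\<in>X. \<forall>y\<in>LL_stat grad Y x. F (xb, yb) \<le> F (x, y)) \<Longrightarrow>
                     yb \<in> LL_sol f Y xb"
    and step: "0 < alo" "alo \<le> ahi" "ahi < 2 / Lf" "\<And>k. alo \<le> alpha k \<and> alpha k \<le> ahi"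
    and min_K: "\<And>K. K \<ge> 1 \<Longrightarrow> xK K \<in> X \<and> zK K \<in> Y \<and>
                  (\<forall>x\<in>X. \<forall>z\<in>Y. phiK F Y grad alpha K (xK K) (zK K) \<le> phiK F Y grad alpha K x z)"
  shows "(\<forall>xb r. strict_mono r \<longrightarrow> (xK \<circ> r) \<longlonglongrightarrow> xb \<longrightarrow>
              xb \<in> X \<and> (\<forall>x\<in>X. phi F f Y xb \<le> phi F f Y x))
         \<and> (\<lambda>K. Inf {phiK F Y grad alpha K x z | x z. x \<in> X \<and> z \<in> Y})
              \<longlonglongrightarrow> Inf (phi F f Y ` X)"
proof -
  interpret S: setting F f grad X Y Lf alo ahi alpha xK zK
    by (rule setting.intro) (use assms in auto)
  show ?thesis using S.part1 S.part2 by blast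
qed

end
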